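(* Let $s$ be a positive integer. Put $d_s(0)=1$ and $d_s(k)=0$ for all integers $k<0$, and for $k\geq 1$ define $d_s(k)=\sum_{j=1}^sd_s(j-1)\,d_s(k-j)$. Then for every $n\geq s$, \[A_{312}(U_{\mathrm{spine}=s,n}^\alpha)=d_s(n-s+1).\]
   Context: For integers $s\ge1$ and $n\ge 0$, the labeled uneven comb $U^\alpha_{\mathrm{spine}=s,n}$ is the poset on $\{1,\dots,n\}$ whose order is generated by the covering relations $i\lessdot i+1$ for $1\le i\le s-1$ with $i+1\le n$, and $i\lessdot i+s$ whenever $i+s\le n$. A linear extension is viewed as a permutation of $[n]$ in which $x$ precedes $y$ whenever $x<y$ in the poset. $A_\tau(P)$ denotes the number of linear extensions of $P$ that avoid the permutation pattern $\tau$. *)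

theory Defs
  imports Main
begin

text \<open>The sequence d_s(k), for k a natural number; the convention d_s(k) = 0 for k < 0
  is built in through the guard j \<le> k (for j > k the term d_s(k-j) has negative index).\<close>
function dseq :: "nat \<Rightarrow> nat \<Rightarrow> nat" where
  "dseq s k = (if k = 0 then 1
     else (\<Sum>j\<in>{1..s}. if j \<le> k then dseq s (j - 1) * dseq s (k - j) else 0))"
  by pat_completeness auto
termination
  by (relation "measure snd") auto

definition comb_cover :: "nat \<Rightarrow> nat \<Rightarrow> nat \<Rightarrow> nat \<Rightarrow> bool" where
  "comb_cover s n x y \<longleftrightarrow>
     (1 \<le> x \<and> x \<le> s - 1 \<and> y = x + 1 \<and> y \<le> n) \<or> (1 \<le> x \<and> y = x + s \<and> y \<le> n)"

definition comb_le :: "nat \<Rightarrow> nat \<Rightarrow> nat \<Rightarrow> nat \<Rightarrow> bool" where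
  "comb_le s n = (comb_cover s n)\<^sup>*\<^sup>*"

definition comb_linext :: "nat \<Rightarrow> nat \<Rightarrow> nat list set" where
  "comb_linext s n = {w. distinct w \<and> set w = {1..n} \<and>
     (\<forall>x y. comb_le s n x y \<and> x \<noteq> y \<longrightarrow>
        (\<exists>i j. i < j \<and> j < length w \<and> w ! i = x \<and> w ! j = y))}"

definition avoids312 :: "nat list \<Rightarrow> bool" where
  "avoids312 w \<longleftrightarrow> \<not> (\<exists>i j k. i < j \<and> j < k \<and> k < length w \<and>
      w ! j < w ! k \<and> w ! k < w ! i)"

definition A312_comb :: "nat \<Rightarrow> nat \<Rightarrow> nat" where
  "A312_comb s n = card {w \<in> comb_linext s n. avoids312 w}"

end

theory Submission
  imports Defs
begin

definition bef :: "nat list \<Rightarrow> nat \<Rightarrow> nat \<Rightarrow> bool" where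
  "bef w x y \<longleftrightarrow> (\<exists>i j. i < j \<and> j < length w \<and> w!i = x \<and> w!j = y)"

definition pat3 :: "nat list \<Rightarrow> nat \<Rightarrow> nat \<Rightarrow> nat \<Rightarrow> bool" where
  "pat3 w a b c \<longleftrightarrow> (\<exists>i j k. i < j \<and> j < k \<and> k < length w \<and> w!i = a \<and> w!j = b \<and> w!k = c)"

lemma bef_append: "bef (xs@ys) a b \<longleftrightarrow> bef xs a b \<or> bef ys a b \<or> (a \<in> set xs \<and> b \<in> set ys)"
proof
  assume "bef (xs@ys) a b"
  then obtain i j where h: "i<j" "j<length (xs@ys)" "(xs@ys)!i = a" "(xs@ys)!j=b"
    unfolding bef_def by blast
  show "bef xs a b \<or> bef ys a b \<or> (a \<in> set xs \<and> b \<in> set ys)"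
  proof (cases "j < length xs")
    case True
    then have "bef xs a b" unfolding bef_def using h
      by (intro exI[of _ i] exI[of _ j]) (auto simp: nth_append)
    then show ?thesis by blast
  next
    case False
    show ?thesis
    proof (cases "i < length xs")
      case True
      then have "a \<in> set xs" using h by (auto simp: nth_append)
      moreover have "b \<in> set ys" using h False by (auto simp: nth_append)
      ultimately show ?thesis by blast
    next
      case F2: False
      have "bef ys a b" unfolding bef_def using h False F2
        by (intro exI[of _ "i - length xs"] exI[of _ "j - length xs"]) (auto simp: nth_append)
      then show ?thesis by blast
    qed
  qed
next
  assume "bef xs a b \<or> bef ys a b \<or> (a \<in> set xs \<and> b \<in> set ys)"
  then show "bef (xs@ys) a b"
  proof (elim disjE conjE)
    assume "bef xs a b"
    then obtain i j where h: "i<j" "j<length xs" "xs!i = a" "xs!j=b" unfolding bef_def by blast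
    then show ?thesis unfolding bef_def
      by (intro exI[of _ i] exI[of _ j]) (auto simp: nth_append)
  next
    assume "bef ys a b"
    then obtain i j where h: "i<j" "j<length ys" "ys!i = a" "ys!j=b" unfolding bef_def by blast
    then show ?thesis unfolding bef_def
      by (intro exI[of _ "i + length xs"] exI[of _ "j + length xs"]) (auto simp: nth_append)
  next
    assume "a \<in> set xs" "b \<in> set ys"
    then obtain i j where h: "i<length xs" "xs!i = a" "j<length ys" "ys!j=b"
      by (auto simp: in_set_conv_nth)
    then show ?thesis unfolding bef_def
      by (intro exI[of _ i] exI[of _ "j + length xs"]) (auto simp: nth_append)
  qed
qed

lemma pat3_append: "pat3 (xs@ys) a b c \<longleftrightarrow> pat3 xs a b c \<or> pat3 ys a b c \<or>
   (a \<in> set xs \<and> bef ys b c) \<or> (bef xs a b \<and> c \<in> set ys)"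
proof
  assume "pat3 (xs@ys) a b c"
  then obtain i j k where h: "i<j" "j<k" "k<length (xs@ys)" "(xs@ys)!i = a" "(xs@ys)!j=b" "(xs@ys)!k=c"
    unfolding pat3_def by blast
  let ?n = "length xs"
  consider "k < ?n" | "j < ?n" "\<not> k < ?n" | "i < ?n" "\<not> j < ?n" | "\<not> i < ?n" by linarith
  then show "pat3 xs a b c \<or> pat3 ys a b c \<or> (a \<in> set xs \<and> bef ys b c) \<or> (bef xs a b \<and> c \<in> set ys)"
  proof cases
    case 1
    then have "pat3 xs a b c" unfolding pat3_def using h
      by (intro exI[of _ i] exI[of _ j] exI[of _ k]) (auto simp: nth_append)
    then show ?thesis by blast
  next
    case 2
    then have "bef xs a b" unfolding bef_def using h
      by (intro exI[of _ i] exI[of _ j]) (auto simp: nth_append)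
    moreover have "c \<in> set ys" using h 2 by (auto simp: nth_append)
    ultimately show ?thesis by blast
  next
    case 3
    then have "bef ys b c" unfolding bef_def using h
      by (intro exI[of _ "j - ?n"] exI[of _ "k - ?n"]) (auto simp: nth_append)
    moreover have "a \<in> set xs" using h 3 by (auto simp: nth_append)
    ultimately show ?thesis by blast
  next
    case 4
    then have "pat3 ys a b c" unfolding pat3_def using h
      by (intro exI[of _ "i - ?n"] exI[of _ "j - ?n"] exI[of _ "k - ?n"]) (auto simp: nth_append)
    then show ?thesis by blast
  qed
next
  assume "pat3 xs a b c \<or> pat3 ys a b c \<or> (a \<in> set xs \<and> bef ys b c) \<or> (bef xs a b \<and> c \<in> set ys)"
  then show "pat3 (xs@ys) a b c"
  proof (elim disjE conjE)
    assume "pat3 xs a b c"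
    then obtain i j k where h: "i<j" "j<k" "k<length xs" "xs!i = a" "xs!j=b" "xs!k=c"
      unfolding pat3_def by blast
    then show ?thesis unfolding pat3_def
      by (intro exI[of _ i] exI[of _ j] exI[of _ k]) (auto simp: nth_append)
  next
    assume "pat3 ys a b c"
    then obtain i j k where h: "i<j" "j<k" "k<length ys" "ys!i = a" "ys!j=b" "ys!k=c"
      unfolding pat3_def by blast
    then show ?thesis unfolding pat3_def
      by (intro exI[of _ "i + length xs"] exI[of _ "j + length xs"] exI[of _ "k + length xs"])
         (auto simp: nth_append)
  next
    assume "a \<in> set xs" "bef ys b c"
    then obtain i j k where h: "i<length xs" "xs!i = a" "j<k" "k<length ys" "ys!j=b" "ys!k=c"
      unfolding bef_def by (auto simp: in_set_conv_nth)
    then show ?thesis unfolding pat3_def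
      by (intro exI[of _ i] exI[of _ "j + length xs"] exI[of _ "k + length xs"]) (auto simp: nth_append)
  next
    assume "bef xs a b" "c \<in> set ys"
    then obtain i j k where h: "i<j" "j<length xs" "xs!i = a" "xs!j=b" "k<length ys" "ys!k=c"
      unfolding bef_def by (auto simp: in_set_conv_nth)
    then show ?thesis unfolding pat3_def
      by (intro exI[of _ i] exI[of _ j] exI[of _ "k + length xs"]) (auto simp: nth_append)
  qed
qed

lemma bef_single[simp]: "\<not> bef [m] a b"
  unfolding bef_def by auto

lemma pat3_single[simp]: "\<not> pat3 [m] a b c"
  unfolding pat3_def by auto

lemma bef_set: "bef w a b \<Longrightarrow> a \<in> set w \<and> b \<in> set w"
  unfolding bef_def by auto

lemma avoids_iff: "avoids312 w \<longleftrightarrow> \<not> (\<exists>a b c. pat3 w a b c \<and> b < c \<and> c < a)"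
  unfolding avoids312_def pat3_def by blast

lemma bef_trans:
  assumes "distinct w" "bef w x y" "bef w y z" shows "bef w x z"
proof -
  obtain i j where h: "i<j" "j<length w" "w!i = x" "w!j=y" using assms(2) unfolding bef_def by blast
  obtain j' k where h': "j'<k" "k<length w" "w!j' = y" "w!k=z" using assms(3) unfolding bef_def by blast
  have "j = j'" using h h' assms(1) nth_eq_iff_index_eq by fastforce
  then show ?thesis unfolding bef_def using h h' by (intro exI[of _ i] exI[of _ k]) auto
qed

lemma split_filter:
  assumes "m \<notin> set w" "\<forall>x y. bef w y x \<longrightarrow> \<not> (x < m \<and> m < y)"
  shows "w = filter (\<lambda>x. x < m) w @ filter (\<lambda>x. m < x) w"
  using assms
proof (induction w)
  case Nil
  then show ?case by simp
next
  case (Cons z r)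
  have b: "\<forall>x y. bef r y x \<longrightarrow> \<not> (x < m \<and> m < y)"
    using Cons.prems(2) bef_append[of "[z]" r] by auto
  have IH: "r = filter (\<lambda>x. x < m) r @ filter (\<lambda>x. m < x) r" using Cons b by auto
  show ?case
  proof (cases "z < m")
    case True
    then show ?thesis using IH by simp
  next
    case False
    then have zm: "m < z" using Cons.prems(1) by auto
    have "\<forall>x\<in>set r. \<not> x < m"
    proof
      fix x assume "x \<in> set r"
      then have "bef (z#r) z x" using bef_append[of "[z]" r] by auto
      then show "\<not> x < m" using Cons.prems(2) zm by blast
    qed
    moreover have "\<forall>x\<in>set r. m < x" using calculation Cons.prems(1)
      by (metis linorder_neqE_nat list.set_intros(2))
    ultimately show ?thesis using zm
      by (simp add: filter_False filter_True)
  qed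
qed

lemma avoids_append: "avoids312 (xs @ ys) \<Longrightarrow> avoids312 xs \<and> avoids312 ys"
  unfolding avoids_iff using pat3_append by blast

lemma avoids_combine:
  assumes "avoids312 u" "avoids312 v" "\<forall>x\<in>set u. x < m" "\<forall>x\<in>set v. m < x"
  shows "avoids312 (u @ v @ [m])"
proof -
  { fix a b c assume p: "pat3 (u @ v @ [m]) a b c" "b < c" "c < a"
    have A: "\<not> pat3 u a b c" "\<not> pat3 v a b c" using assms(1,2) p(2,3) unfolding avoids_iff by blast+
    from p(1) consider "pat3 u a b c" | "pat3 (v@[m]) a b c" | "a \<in> set u" "bef (v@[m]) b c"
      | "bef u a b" "c \<in> set (v@[m])" unfolding pat3_append by blast
    then have False
    proof cases
      case 1 then show ?thesis using A by blast
    next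
      case 2
      then consider "pat3 v a b c" | "a \<in> set v" "bef [m] b c" | "bef v a b" "c \<in> set [m]"
        unfolding pat3_append by auto
      then show ?thesis
      proof cases
        case 1 then show ?thesis using A by blast
      next
        case 2 then show ?thesis by simp
      next
        case 3 then have "b \<in> set v" "c = m" using bef_set by auto
        then show ?thesis using assms(4) p(2) by auto
      qed
    next
      case 3 then have "c \<in> set (v@[m])" using bef_set by blast
      then have "m \<le> c" using assms(4) by auto
      moreover have "a < m" using 3 assms(3) by auto
      ultimately show ?thesis using p by auto
    next
      case 4 then have "a \<in> set u" using bef_set by blast
      then have "a < m" using assms(3) by auto
      moreover have "m \<le> c" using 4 assms(4) by auto
      ultimately show ?thesis using p by auto
    qed
  }
  then show ?thesis unfolding avoids_iff by blast
qed

lemma linext_iff: "1 \<le> s \<Longrightarrow> w \<in> comb_linext s n \<longleftrightarrow> (distinct w \<and> set w = {1..n} \<and>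
   (\<forall>x y. comb_cover s n x y \<longrightarrow> bef w x y))"
proof
  assume s1: "1 \<le> s" and h: "w \<in> comb_linext s n"
  have "bef w x y" if c: "comb_cover s n x y" for x y
  proof -
    have "comb_le s n x y" "x \<noteq> y" using c s1 unfolding comb_le_def comb_cover_def by auto
    then show "bef w x y" using h unfolding comb_linext_def bef_def by blast
  qed
  then show "distinct w \<and> set w = {1..n} \<and> (\<forall>x y. comb_cover s n x y \<longrightarrow> bef w x y)"
    using h unfolding comb_linext_def by auto
next
  assume s1: "1 \<le> s" and h: "distinct w \<and> set w = {1..n} \<and> (\<forall>x y. comb_cover s n x y \<longrightarrow> bef w x y)"
  have "x = y \<or> bef w x y" if "comb_le s n x y" for x y
    using that unfolding comb_le_def
  proof (induction rule: rtranclp_induct)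
    case base then show ?case by simp
  next
    case (step y z)
    then show ?case using h bef_trans by blast
  qed
  then show "w \<in> comb_linext s n" using h unfolding comb_linext_def bef_def by blast
qed

lemma finite_dl: "finite S \<Longrightarrow> finite {w. distinct w \<and> set w = S \<and> P w}"
proof -
  assume f: "finite S"
  have "{w. distinct w \<and> set w = S \<and> P w} \<subseteq> {w. set w \<subseteq> S \<and> length w \<le> card S}"
    using distinct_card by fastforce
  then show ?thesis using finite_lists_length_le[OF f] finite_subset by blast
qed

lemma card_decomp:
  fixes X Z :: "nat \<Rightarrow> nat list set"
  assumes "finite M" "\<forall>m\<in>M. finite (X m)" "\<forall>m\<in>M. finite (Z m)"
    "\<forall>m\<in>M. \<forall>u\<in>X m. \<forall>u'\<in>X m. length u = length u'"
  shows "card (\<Union>m\<in>M. (\<lambda>(u,v). u@v@[m]) ` (X m \<times> Z m)) = (\<Sum>m\<in>M. card (X m) * card (Z m))"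
proof -
  have "card (\<Union>m\<in>M. (\<lambda>(u,v). u@v@[m]) ` (X m \<times> Z m)) =
        (\<Sum>m\<in>M. card ((\<lambda>(u,v). u@v@[m]) ` (X m \<times> Z m)))"
  proof (rule card_UN_disjoint)
    show "finite M" by (rule assms(1))
    show "\<forall>i\<in>M. finite ((\<lambda>(u,v). u@v@[i]) ` (X i \<times> Z i))" using assms(2,3) by blast
    show "\<forall>i\<in>M. \<forall>j\<in>M. i \<noteq> j \<longrightarrow> (\<lambda>(u,v). u@v@[i]) ` (X i \<times> Z i) \<inter> (\<lambda>(u,v). u@v@[j]) ` (X j \<times> Z j) = {}"
      by fastforce
  qed
  also have "\<dots> = (\<Sum>m\<in>M. card (X m \<times> Z m))"
  proof (rule sum.cong[OF refl])
    fix m assume m: "m \<in> M"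
    have "inj_on (\<lambda>(u,v). u@v@[m]) (X m \<times> Z m)"
    proof (rule inj_onI, clarsimp)
      fix u v u' v' assume "u \<in> X m" "v \<in> Z m" "u' \<in> X m" "v' \<in> Z m" "u @ v = u' @ v'"
      moreover have "length u = length u'" using assms(4) m calculation by blast
      ultimately show "u = u' \<and> v = v'" by simp
    qed
    then show "card ((\<lambda>(u,v). u@v@[m]) ` (X m \<times> Z m)) = card (X m \<times> Z m)"
      by (rule card_image)
  qed
  also have "\<dots> = (\<Sum>m\<in>M. card (X m) * card (Z m))" by (simp add: card_cartesian_product)
  finally show ?thesis .
qed

declare dseq.simps[simp del]

definition Lset :: "nat \<Rightarrow> nat \<Rightarrow> nat list set" where
  "Lset s n = {w \<in> comb_linext s n. avoids312 w}"

definition Yset :: "nat \<Rightarrow> nat \<Rightarrow> nat list set" where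
  "Yset a b = {w. distinct w \<and> set w = {a<..b} \<and> avoids312 w}"

definition Fm :: "nat \<Rightarrow> nat list \<times> nat list \<Rightarrow> nat list" where
  "Fm m = (\<lambda>(u,v). u@v@[m])"

lemma decomp_core:
  assumes "distinct (w@[m])" "avoids312 (w@[m])"
  shows "w = filter (\<lambda>x. x < m) w @ filter (\<lambda>x. m < x) w"
proof (rule split_filter)
  show "m \<notin> set w" using assms(1) by simp
  show "\<forall>x y. bef w y x \<longrightarrow> \<not> (x < m \<and> m < y)"
  proof (intro allI impI notI)
    fix x y assume "bef w y x" "x < m \<and> m < y"
    then have "pat3 (w@[m]) y x m" unfolding pat3_append by simp
    then show False using assms(2) \<open>x < m \<and> m < y\<close> unfolding avoids_iff by blast
  qed
qed

lemma Y_decomp: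
  assumes "a < b"
  shows "Yset a b = (\<Union>m\<in>{a<..b}. Fm m ` (Yset a (m-1) \<times> Yset m b))"
proof (intro set_eqI iffI)
  fix w assume w: "w \<in> Yset a b"
  then have "w \<noteq> []" using assms unfolding Yset_def by auto
  then obtain w' m where wm: "w = w'@[m]" by (metis rev_exhaust)
  have d: "distinct (w'@[m])" and av: "avoids312 (w'@[m])" and st: "set (w'@[m]) = {a<..b}"
    using w wm unfolding Yset_def by auto
  have m: "m \<in> {a<..b}" using st by auto
  have mw: "m \<notin> set w'" using d by simp
  define u where "u = filter (\<lambda>x. x < m) w'"
  define v where "v = filter (\<lambda>x. m < x) w'"
  have eq: "w' = u @ v" using decomp_core[OF d av] unfolding u_def v_def .
  have avuv: "avoids312 u" "avoids312 v"
    using av unfolding eq by (auto dest: avoids_append)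
  have sw: "set w' = {a<..b} - {m}" using st mw by auto
  have "set u = {a<..m-1}" unfolding u_def set_filter sw using m by auto
  moreover have "set v = {m<..b}" unfolding v_def set_filter sw using m by auto
  ultimately have "u \<in> Yset a (m-1)" "v \<in> Yset m b" using d avuv unfolding Yset_def u_def v_def by auto
  moreover have "w = Fm m (u,v)" unfolding Fm_def wm eq by simp
  ultimately show "w \<in> (\<Union>m\<in>{a<..b}. Fm m ` (Yset a (m-1) \<times> Yset m b))" using m by blast
next
  fix w assume "w \<in> (\<Union>m\<in>{a<..b}. Fm m ` (Yset a (m-1) \<times> Yset m b))"
  then obtain m u v where m: "m \<in> {a<..b}" and u: "u \<in> Yset a (m-1)" and v: "v \<in> Yset m b"
    and w: "w = u@v@[m]" unfolding Fm_def by auto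
  have su: "set u = {a<..m-1}" and sv: "set v = {m<..b}" using u v unfolding Yset_def by auto
  have "distinct w" using u v su sv unfolding w Yset_def by auto
  moreover have "set w = {a<..b}" using su sv m unfolding w by auto
  moreover have "avoids312 w" unfolding w
    by (rule avoids_combine) (use u v su sv in \<open>auto simp: Yset_def\<close>)
  ultimately show "w \<in> Yset a b" unfolding Yset_def by blast
qed

lemma Yset_empty: "Yset a a = {[]}"
  unfolding Yset_def avoids312_def by auto

lemma finite_Yset: "finite (Yset a b)"
  unfolding Yset_def by (rule finite_dl) simp

lemma dseq_pos: "0 < k \<Longrightarrow> dseq s k = (\<Sum>j\<in>{1..s}. if j \<le> k then dseq s (j - 1) * dseq s (k - j) else 0)"
  by (subst dseq.simps) simp

lemma dseq_0: "dseq s 0 = 1"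
  by (subst dseq.simps) simp

lemma dseq_small:
  assumes "0 < k" "k \<le> t"
  shows "dseq t k = (\<Sum>j\<in>{1..k}. dseq t (j - 1) * dseq t (k - j))"
proof -
  have "dseq t k = (\<Sum>j\<in>{j\<in>{1..t}. j \<le> k}. dseq t (j - 1) * dseq t (k - j))"
    unfolding dseq_pos[OF assms(1)] by (rule sum.inter_filter[symmetric]) simp
  also have "{j\<in>{1..t}. j \<le> k} = {1..k}" using assms by auto
  finally show ?thesis .
qed

lemma Yset_len: "u \<in> Yset a b \<Longrightarrow> u' \<in> Yset a b \<Longrightarrow> length u = length u'"
  unfolding Yset_def by (metis (mono_tags, lifting) distinct_card mem_Collect_eq)

lemma Y_card: "k \<le> t \<Longrightarrow> card (Yset a (a + k)) = dseq t k"
proof (induction k arbitrary: a rule: less_induct)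
  case (less k)
  show ?case
  proof (cases "k = 0")
    case True
    then show ?thesis by (simp add: Yset_empty dseq_0)
  next
    case False
    then have k0: "0 < k" by simp
    have "card (Yset a (a + k)) = card (\<Union>m\<in>{a<..a+k}. Fm m ` (Yset a (m-1) \<times> Yset m (a+k)))"
      using Y_decomp[of a "a+k"] k0 by simp
    also have "\<dots> = (\<Sum>m\<in>{a<..a+k}. card (Yset a (m-1)) * card (Yset m (a+k)))"
      unfolding Fm_def
      by (rule card_decomp) (auto simp: finite_Yset intro: Yset_len)
    also have "\<dots> = (\<Sum>m\<in>{a<..a+k}. dseq t (m - 1 - a) * dseq t (a + k - m))"
    proof (rule sum.cong[OF refl])
      fix m assume m: "m \<in> {a<..a+k}"
      have "card (Yset a (m-1)) = card (Yset a (a + (m-1-a)))" using m by simp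
      also have "\<dots> = dseq t (m-1-a)" using m less by (intro less.IH) auto
      finally have 1: "card (Yset a (m-1)) = dseq t (m-1-a)" .
      have "card (Yset m (a+k)) = card (Yset m (m + (a+k-m)))" using m by simp
      also have "\<dots> = dseq t (a+k-m)" using m less by (intro less.IH) auto
      finally show "card (Yset a (m-1)) * card (Yset m (a+k)) = dseq t (m - 1 - a) * dseq t (a + k - m)"
        using 1 by simp
    qed
    also have "\<dots> = (\<Sum>j\<in>{1..k}. dseq t (j - 1) * dseq t (k - j))"
    proof (rule sum.reindex_bij_witness[of _ "\<lambda>j. a + j" "\<lambda>m. m - a"])
    qed (auto simp: add.commute[of k a])
    also have "\<dots> = dseq t k" using dseq_small[OF k0 less.prems] by simp
    finally show ?thesis .
  qed
qed

definition Mset :: "nat \<Rightarrow> nat \<Rightarrow> nat set" where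
  "Mset s n = {m\<in>{1..n}. n < m + s \<and> (s \<le> m \<or> m = n)}"

lemma L_decomp:
  assumes s1: "1 \<le> s" and n1: "1 \<le> n"
  shows "Lset s n = (\<Union>m\<in>Mset s n. Fm m ` (Lset s (m-1) \<times> Yset m n))"
proof (intro set_eqI iffI)
  fix w assume w: "w \<in> Lset s n"
  have wl: "distinct w" "set w = {1..n}" "\<forall>x y. comb_cover s n x y \<longrightarrow> bef w x y" "avoids312 w"
    using w linext_iff[OF s1] unfolding Lset_def by auto
  then have "w \<noteq> []" using n1 by auto
  then obtain w' m where wm: "w = w'@[m]" by (metis rev_exhaust)
  have d: "distinct (w'@[m])" and av: "avoids312 (w'@[m])" and st: "set (w'@[m]) = {1..n}"
    using wl wm by auto
  have mw: "m \<notin> set w'" using d by simp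
  have m: "m \<in> {1..n}" using st by auto
  have nb: "\<not> bef w m y" for y
    unfolding wm bef_append using mw bef_set by auto
  have c1: "n < m + s"
  proof (rule ccontr)
    assume "\<not> n < m + s"
    then have "comb_cover s n m (m+s)" using m unfolding comb_cover_def by auto
    then show False using wl(3) nb by blast
  qed
  have c2: "s \<le> m \<or> m = n"
  proof (rule ccontr)
    assume "\<not> (s \<le> m \<or> m = n)"
    then have "comb_cover s n m (m+1)" using m unfolding comb_cover_def by auto
    then show False using wl(3) nb by blast
  qed
  have mM: "m \<in> Mset s n" unfolding Mset_def using m c1 c2 by auto
  define u where "u = filter (\<lambda>x. x < m) w'"
  define v where "v = filter (\<lambda>x. m < x) w'"
  have eq: "w' = u @ v" using decomp_core[OF d av] unfolding u_def v_def .
  have avuv: "avoids312 u" "avoids312 v"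
    using av unfolding eq by (auto dest: avoids_append)
  have sw: "set w' = {1..n} - {m}" using st mw by auto
  have su: "set u = {1..m-1}" unfolding u_def set_filter sw using m by auto
  have sv: "set v = {m<..n}" unfolding v_def set_filter sw using m by auto
  have du: "distinct u" "distinct v" using d unfolding u_def v_def by auto
  have "bef u x y" if c: "comb_cover s (m-1) x y" for x y
  proof -
    have "comb_cover s n x y" using c m unfolding comb_cover_def by auto
    then have b: "bef (u @ (v @ [m])) x y" using wl(3) unfolding wm eq by simp
    have "y \<le> m - 1" using c unfolding comb_cover_def by auto
    then have "y \<notin> set (v @ [m])" using sv m by auto
    then show "bef u x y" using b unfolding bef_append[of u] using bef_set by blast
  qed
  then have "u \<in> Lset s (m-1)" unfolding Lset_def using linext_iff[OF s1] su du avuv by auto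
  moreover have "v \<in> Yset m n" unfolding Yset_def using sv du avuv by auto
  moreover have "w = Fm m (u,v)" unfolding Fm_def wm eq by simp
  ultimately show "w \<in> (\<Union>m\<in>Mset s n. Fm m ` (Lset s (m-1) \<times> Yset m n))" using mM by blast
next
  fix w assume "w \<in> (\<Union>m\<in>Mset s n. Fm m ` (Lset s (m-1) \<times> Yset m n))"
  then obtain m u v where m: "m \<in> Mset s n" and u: "u \<in> Lset s (m-1)" and v: "v \<in> Yset m n"
    and w: "w = u@v@[m]" unfolding Fm_def by auto
  have ul: "distinct u" "set u = {1..m-1}" "\<forall>x y. comb_cover s (m-1) x y \<longrightarrow> bef u x y" "avoids312 u"
    using u linext_iff[OF s1] unfolding Lset_def by auto
  have vl: "distinct v" "set v = {m<..n}" "avoids312 v" using v unfolding Yset_def by auto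
  have mm: "1 \<le> m" "m \<le> n" "n < m + s" "s \<le> m \<or> m = n" using m unfolding Mset_def by auto
  have "distinct w" using ul vl unfolding w by auto
  moreover have "set w = {1..n}" using ul vl mm unfolding w by auto
  moreover have "avoids312 w" unfolding w
    by (rule avoids_combine) (use ul vl in auto)
  moreover have "bef w x y" if c: "comb_cover s n x y" for x y
  proof -
    have xy: "1 \<le> x" "x < y" "y \<le> n" using c s1 unfolding comb_cover_def by auto
    consider "y < m" | "y = m" | "x < m" "m < y" | "m \<le> x" using xy by linarith
    then show ?thesis
    proof cases
      case 1
      then have "comb_cover s (m-1) x y" using c unfolding comb_cover_def by auto
      then have "bef u x y" using ul by blast
      then show ?thesis unfolding w bef_append by simp
    next
      case 2
      then have "x \<in> set u" using ul xy by auto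
      then show ?thesis unfolding w bef_append using 2 by simp
    next
      case 3
      then have "x \<in> set u" "y \<in> set v" using ul vl xy by auto
      then show ?thesis unfolding w bef_append by simp
    next
      case 4
      then have False using c mm xy unfolding comb_cover_def by auto
      then show ?thesis ..
    qed
  qed
  ultimately show "w \<in> Lset s n" unfolding Lset_def using linext_iff[OF s1] by auto
qed

lemma finite_Lset: "finite (Lset s n)"
proof -
  have "Lset s n \<subseteq> {w. distinct w \<and> set w = {1..n} \<and> True}"
    unfolding Lset_def comb_linext_def by auto
  then show ?thesis using finite_dl[of "{1..n}" "\<lambda>_. True"] finite_subset by auto
qed

lemma Lset_len: "u \<in> Lset s n \<Longrightarrow> u' \<in> Lset s n \<Longrightarrow> length u = length u'"
  unfolding Lset_def comb_linext_def by (metis (mono_tags, lifting) distinct_card mem_Collect_eq)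

lemma Lset_0: "1 \<le> s \<Longrightarrow> Lset s 0 = {[]}"
proof -
  assume s1: "1 \<le> s"
  have "\<not> comb_cover s 0 x y" for x y unfolding comb_cover_def by auto
  then show ?thesis unfolding Lset_def using linext_iff[OF s1, of _ 0]
    by (auto simp: avoids312_def)
qed

lemma main: "1 \<le> s \<Longrightarrow> card (Lset s n) = dseq s (n + 1 - s)"
proof (induction n rule: less_induct)
  case (less n)
  note s1 = less.prems
  show ?case
  proof (cases "n = 0")
    case True
    then show ?thesis using Lset_0[OF s1] s1 by (simp add: dseq_0)
  next
    case False
    then have n1: "1 \<le> n" by simp
    have fM: "finite (Mset s n)" unfolding Mset_def by simp
    have "card (Lset s n) = card (\<Union>m\<in>Mset s n. Fm m ` (Lset s (m-1) \<times> Yset m n))"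
      using L_decomp[OF s1 n1] by simp
    also have "\<dots> = (\<Sum>m\<in>Mset s n. card (Lset s (m-1)) * card (Yset m n))"
      unfolding Fm_def
      by (rule card_decomp) (auto simp: finite_Yset finite_Lset fM intro: Lset_len)
    also have "\<dots> = (\<Sum>m\<in>Mset s n. dseq s (m - s) * dseq s (n - m))"
    proof (rule sum.cong[OF refl])
      fix m assume m: "m \<in> Mset s n"
      then have mm: "1 \<le> m" "m \<le> n" "n < m + s" unfolding Mset_def by auto
      have 1: "card (Lset s (m-1)) = dseq s (m - s)"
        using less.IH[of "m-1"] mm s1 by simp
      have "card (Yset m n) = card (Yset m (m + (n-m)))" using mm by simp
      also have "\<dots> = dseq s (n-m)" using mm by (intro Y_card) auto
      finally show "card (Lset s (m-1)) * card (Yset m n) = dseq s (m - s) * dseq s (n - m)"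
        using 1 by simp
    qed
    also have "\<dots> = dseq s (n + 1 - s)"
    proof (cases "n < s")
      case True
      then have "Mset s n = {n}" unfolding Mset_def using n1 by auto
      then show ?thesis using True by (simp add: dseq_0)
    next
      case False
      define k where "k = n + 1 - s"
      have k0: "0 < k" using False unfolding k_def by simp
      have "dseq s k = (\<Sum>j\<in>{j\<in>{1..s}. j \<le> k}. dseq s (j - 1) * dseq s (k - j))"
        unfolding dseq_pos[OF k0] by (rule sum.inter_filter[symmetric]) simp
      also have "\<dots> = (\<Sum>m\<in>Mset s n. dseq s (m - s) * dseq s (n - m))"
      proof (rule sym, rule sum.reindex_bij_witness[of _ "\<lambda>m. n + 1 - m" "\<lambda>j. n + 1 - j"])
        fix m assume "m \<in> Mset s n"
        then have mm: "1 \<le> m" "m \<le> n" "n < m + s" "s \<le> m" using False unfolding Mset_def by auto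
        show "n + 1 - (n + 1 - m) = m" using mm by simp
        show "n + 1 - m \<in> {j\<in>{1..s}. j \<le> k}" using mm unfolding k_def by auto
        have e1: "n + 1 - m - 1 = n - m" by simp
        have e2: "k - (n + 1 - m) = m - s" using mm unfolding k_def by simp
        show "dseq s (n + 1 - m - 1) * dseq s (k - (n + 1 - m)) = dseq s (m - s) * dseq s (n - m)"
          unfolding e1 e2 by (simp add: mult.commute)
      next
        fix j assume "j \<in> {j\<in>{1..s}. j \<le> k}"
        then have jj: "1 \<le> j" "j \<le> s" "j \<le> k" by auto
        show "n + 1 - (n + 1 - j) = j" using jj False unfolding k_def by simp
        show "n + 1 - j \<in> Mset s n" using jj False unfolding k_def Mset_def by auto
      qed
      finally show ?thesis unfolding k_def by simp
    qed
    finally show ?thesis .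
  qed
qed

theorem theorem2:
  fixes s n :: nat
  assumes "1 \<le> s" and "s \<le> n"
  shows "A312_comb s n = dseq s (n - s + 1)"
proof -
  have "A312_comb s n = card (Lset s n)" unfolding A312_comb_def Lset_def by simp
  also have "\<dots> = dseq s (n + 1 - s)" using main assms(1) by blast
  also have "n + 1 - s = n - s + 1" using assms(2) by simp
  finally show ?thesis .
qed

end
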